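(* Let Assumptions (H1) and (H2) hold (with constant $\varepsilon>0$), and suppose each initial function $\mathcal{Q}_t^0$, $t=2,\ldots,T$, is either identically $-\infty$ or convex, Lipschitz continuous on $\mathcal{X}_{t-1}^\varepsilon$ and satisfies $\mathcal{Q}_t^0\le\mathcal{Q}_t$ there. Consider the sequences $\mathcal{Q}_t^k,\theta_t^k,\beta_t^k$ generated by SREDA. Then almost surely, for $t=2,\ldots,T+1$: (a) $\mathcal{Q}_t^k$ is convex and $\mathcal{Q}_t^k\le\mathcal{Q}_t$ on $\mathcal{X}_{t-1}^\varepsilon$ for all $k\ge1$; (b) the sequences $(\theta_t^k)_{k\ge1}$ and $(\beta_t^k)_{k\ge1}$ are bounded; (c) for every $k\ge1$, $\mathcal{Q}_t^k$ is Lipschitz continuous on $\mathcal{X}_{t-1}^\varepsilon$.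
   Context: Stages $t=1,\ldots,T$; $x_0\in\mathbb{R}^n$ given, $\mathcal{X}_0:=\{x_0\}$. Random data process $(\xi_t)$: $\xi_1$ deterministic; (H1): $(\xi_t)$ is interstage independent and for $t=2,\ldots,T$, $\xi_t$ is a random vector in $\mathbb{R}^K$ with discrete distribution and finite support $\Theta_t=\{\xi_{t,1},\ldots,\xi_{t,M}\}$. The components of $\xi_t$ include the entries of $(b_t,A_t,B_t)$. For each $t$: $\mathcal{X}_t\subset\mathbb{R}^n$, $f_t(x_{t-1},x_t,\xi_t)\in\mathbb{R}\cup\{+\infty\}$, vector function $g_t(x_{t-1},x_t,\xi_t)$, and $X_t(x_{t-1},\xi_t)=\{x_t\in\mathcal{X}_t: g_t(x_{t-1},x_t,\xi_t)\le0,\ A_tx_t+B_tx_{t-1}=b_t\}$. Dynamic programming: $\mathcal{Q}_{T+1}\equiv0$; $\mathfrak{Q}_t(x_{t-1},\xi_t)=\inf\{F_t(x_{t-1},x_t,\xi_t):=f_t(x_{t-1},x_t,\xi_t)+\mathcal{Q}_{t+1}(x_t): x_t\in X_t(x_{t-1},\xi_t)\}$; $\mathcal{Q}_t(x_{t-1})=\mathbb{E}[\mathfrak{Q}_t(x_{t-1},\xi_t)]$ for $t=2,\ldots,T$; $\mathcal{Q}_1(x_0)=\mathfrak{Q}_1(x_0,\xi_1)$ is the optimal value. $\mathcal{X}^\varepsilon:=\mathcal{X}+\varepsilon\mathbb{B}_n$ ($\mathbb{B}_n$ closed unit ball). (H2), for $t=1,\ldots,T$: 1) $\mathcal{X}_t$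 nonempty convex compact; 2) for all $x_{t-1},x_t$, $f_t(x_{t-1},x_t,\cdot)$ is measurable and for each $j$, $f_t(\cdot,\cdot,\xi_{t,j})$ is proper convex lsc; 3) for each $j$, each component of $g_t(\cdot,\cdot,\xi_{t,j})$ is convex lsc; 4) there is $\varepsilon>0$ such that for each $j$, $\mathcal{X}_{t-1}^\varepsilon\times\mathcal{X}_t\subset\mathrm{dom}\,f_t(\cdot,\cdot,\xi_{t,j})$ and $X_t(x_{t-1},\xi_{t,j})\neq\emptyset$ for all $x_{t-1}\in\mathcal{X}_{t-1}^\varepsilon$; 5) if $t\ge2$, for each $j$ there is $(\bar y,\bar x)\in(\mathcal{X}_{t-1}\times\mathrm{ri}(\mathcal{X}_t))\cap\mathrm{ri}(\{g_t(\cdot,\cdot,\xi_{t,j})\le0\})$ with $\bar x\in X_t(\bar y,\xi_{t,j})$. Scenario tree: root $n_0$ (stage 0, decision $x_0$) with one child $n_1$ (stage 1, $\xi_{n_1}=\xi_1$); each node of stage $t-1$ ($2\le t\le T$) has $M$ children $m$, one per $\xi_{t,j}$, with realization $\xi_m=\xi_{t,j}$ (containing $A_m,B_m,b_m$) and probability $p_m=\mathbb{P}(\xi_t=\xi_{t,j})$. $\mathrm{Nodes}(t)$ = nodes of stage $t$, $C(n)$ = children of $n$. SREDA: initial $\mathcal{Q}_t^0\le\mathcal{Q}_t$ ($t=2,\ldots,T$), $\mathcal{Q}_{T+1}^k\equiv0$ for all $k$; nonnegative $\lambda_{t,k}$ with $\lambda_{t,1}=\lambda_{T,k}=0$; arbitrary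 prox-centers $x_t^{P,k}\in\mathcal{X}_t$. Iteration $k\ge1$: Forward pass: $x_{n_0}^k=x_0$; for $t=1,\ldots,T$, every node $n$ of stage $t-1$ and every $m\in C(n)$, $x_m^k$ is an optimal solution of $\min\{\bar F_t^{k-1}(x_n^k,x_m,x_t^{P,k},\xi_m):x_m\in X_t(x_n^k,\xi_m)\}$, where $\bar F_t^{k-1}(x_n,x_m,x^P,\xi_m)=f_t(x_n,x_m,\xi_m)+\mathcal{Q}_{t+1}^{k-1}(x_m)+\lambda_{t,k}\|x_m-x^P\|^2$. Backward pass: select nodes $(n_1^k,\ldots,n_T^k)$ with $n_1^k=n_1$ and $n_t^k\in C(n_{t-1}^k)$, corresponding to a sample $(\xi_1^k,\ldots,\xi_T^k)$. For $t=T,\ldots,2$, with $n=n_{t-1}^k$: for each $m\in C(n)$ compute $\underline{\mathfrak{Q}}_t^k(x_n^k,\xi_m)=\inf\{f_t(x_n^k,x_m,\xi_m)+\mathcal{Q}_{t+1}^k(x_m):x_m\in X_t(x_n^k,\xi_m)\}$ and a subgradient $\pi_m^k\in\partial\underline{\mathfrak{Q}}_t^k(\cdot,\xi_m)(x_n^k)$; set $\theta_t^k=\sum_{m\in C(n)}p_m\underline{\mathfrak{Q}}_t^k(x_n^k,\xi_m)$, $\beta_t^k=\sum_{m\in C(n)}p_m\pi_m^k$, cut $\mathcal{C}_t^k(y)=\theta_t^k+\langle\beta_t^k,y-x_n^k\rangle$, and $\mathcal{Q}_t^k=\max\{\mathcal{Q}_t^{k-1},\mathcal{C}_t^k\}$.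 *)

theory Defs
  imports "HOL-Probability.Probability"
begin

text \<open>Data of the multistage stochastic program (H1): horizon T, number M of
realizations per stage t = 2..T, their probabilities, x0, the sets X_t, and for
stage t and realization index j the functions f_t(.,.,xi_{t,j}), g_t(.,.,xi_{t,j})
(vector valued, indexed by the finite type 'c) and the data A_t, B_t, b_t of xi_{t,j}.
Stage 1 is deterministic: only the index j = 0 is used there.\<close>

record ('n::finite, 'm::finite, 'c::finite) msp =
  horizon :: nat
  nreal :: nat
  prb :: "nat \<Rightarrow> nat \<Rightarrow> real"
  x0 :: "real^'n"
  Xc :: "nat \<Rightarrow> (real^'n) set"
  fc :: "nat \<Rightarrow> nat \<Rightarrow> (real^'n) \<times> (real^'n) \<Rightarrow> ereal"
  gc :: "nat \<Rightarrow> nat \<Rightarrow> (real^'n) \<times> (real^'n) \<Rightarrow> real^'c"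
  Ac :: "nat \<Rightarrow> nat \<Rightarrow> real^'n^'m"
  Bc :: "nat \<Rightarrow> nat \<Rightarrow> real^'n^'m"
  bc :: "nat \<Rightarrow> nat \<Rightarrow> real^'m"

definition supp :: "('n::finite,'m::finite,'c::finite) msp \<Rightarrow> nat \<Rightarrow> nat set" where
  "supp P t = (if t = 1 then {0} else {..<nreal P})"

definition pr :: "('n::finite,'m::finite,'c::finite) msp \<Rightarrow> nat \<Rightarrow> nat \<Rightarrow> real" where
  "pr P t j = (if t = 1 then 1 else prb P t j)"

definition Xst :: "('n::finite,'m::finite,'c::finite) msp \<Rightarrow> nat \<Rightarrow> (real^'n) set" where
  "Xst P t = (if t = 0 then {x0 P} else Xc P t)"

definition Xfeas :: "('n::finite,'m::finite,'c::finite) msp \<Rightarrow> nat \<Rightarrow> nat \<Rightarrow> real^'n \<Rightarrow> (real^'n) set" where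
  "Xfeas P t j y = {x \<in> Xc P t. (\<forall>i. gc P t j (y, x) $ i \<le> 0) \<and>
                     Ac P t j *v x + Bc P t j *v y = bc P t j}"

definition enl :: "('a::metric_space) set \<Rightarrow> real \<Rightarrow> 'a set" where
  "enl S e = (\<Union>y\<in>S. cball y e)"

text \<open>Dynamic programming: Qs P s is Q_{T+1-s}.\<close>
fun Qs :: "('n::finite,'m::finite,'c::finite) msp \<Rightarrow> nat \<Rightarrow> real^'n \<Rightarrow> ereal" where
  "Qs P 0 y = 0"
| "Qs P (Suc s) y =
     (let t = horizon P - s in
      (\<Sum>j\<in>supp P t. ereal (pr P t j) *
          Inf ((\<lambda>x. fc P t j (y, x) + Qs P s x) ` Xfeas P t j y)))"

definition Qcal :: "('n::finite,'m::finite,'c::finite) msp \<Rightarrow> nat \<Rightarrow> real^'n \<Rightarrow> ereal" where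
  "Qcal P t = Qs P (horizon P + 1 - t)"

definition econvex :: "('a::real_vector \<Rightarrow> ereal) \<Rightarrow> bool" where
  "econvex f \<longleftrightarrow> convex {(x, r::real). f x \<le> ereal r}"

definition eproper :: "('a \<Rightarrow> ereal) \<Rightarrow> bool" where
  "eproper f \<longleftrightarrow> (\<forall>x. f x \<noteq> -\<infinity>) \<and> (\<exists>x. f x \<noteq> \<infinity>)"

definition elsc :: "('a::topological_space \<Rightarrow> ereal) \<Rightarrow> bool" where
  "elsc f \<longleftrightarrow> (\<forall>c::real. closed {x. f x \<le> ereal c})"

definition edom :: "('a \<Rightarrow> ereal) \<Rightarrow> 'a set" where
  "edom f = {x. f x < \<infinity>}"

definition esubgrad :: "('a::real_inner \<Rightarrow> ereal) \<Rightarrow> 'a \<Rightarrow> 'a set" where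
  "esubgrad f x = {g. \<bar>f x\<bar> \<noteq> \<infinity> \<and> (\<forall>y. f x + ereal (g \<bullet> (y - x)) \<le> f y)}"

text \<open>Assumption (H1) (interstage independence is built into the indexing).\<close>
definition H1 :: "('n::finite,'m::finite,'c::finite) msp \<Rightarrow> bool" where
  "H1 P \<longleftrightarrow> 1 \<le> horizon P \<and>
     (\<forall>t\<in>{2..horizon P}. (\<forall>j<nreal P. 0 < prb P t j) \<and> (\<Sum>j<nreal P. prb P t j) = 1)"

definition H2 :: "('n::finite,'m::finite,'c::finite) msp \<Rightarrow> real \<Rightarrow> bool" where
  "H2 P eps \<longleftrightarrow> 0 < eps \<and> (\<forall>t\<in>{1..horizon P}.
     Xc P t \<noteq> {} \<and> convex (Xc P t) \<and> compact (Xc P t) \<and>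
     (\<forall>j\<in>supp P t. eproper (fc P t j) \<and> econvex (fc P t j) \<and> elsc (fc P t j)) \<and>
     (\<forall>j\<in>supp P t. \<forall>i. convex_on UNIV (\<lambda>z. gc P t j z $ i) \<and>
                         (\<forall>c. closed {z. gc P t j z $ i \<le> c})) \<and>
     (\<forall>j\<in>supp P t. enl (Xst P (t - 1)) eps \<times> Xc P t \<subseteq> edom (fc P t j) \<and>
                     (\<forall>y\<in>enl (Xst P (t - 1)) eps. Xfeas P t j y \<noteq> {})) \<and>
     (2 \<le> t \<longrightarrow> (\<forall>j\<in>supp P t. \<exists>yb xb. yb \<in> Xst P (t - 1) \<and> xb \<in> rel_interior (Xc P t) \<and>
            (yb, xb) \<in> rel_interior {z. \<forall>i. gc P t j z $ i \<le> 0} \<and> xb \<in> Xfeas P t j yb)))"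

text \<open>Nodes of stage t >= 1 are lists of realization indices
(for stages 2..t) of length t-1; n_1 = []. xf k m = x_m^k; sj k t = index of the
node sampled at stage t in iteration k; Qk k t = Q_t^k; pig k t j = pi_m^k for the
child m with index j; theta k t, beta k t as in the backward pass.\<close>
definition sreda_run ::
  "('n::finite,'m::finite,'c::finite) msp \<Rightarrow> (nat \<Rightarrow> nat \<Rightarrow> real) \<Rightarrow> (nat \<Rightarrow> nat \<Rightarrow> real^'n)
   \<Rightarrow> (nat \<Rightarrow> real^'n \<Rightarrow> ereal)
   \<Rightarrow> (nat \<Rightarrow> nat list \<Rightarrow> real^'n) \<Rightarrow> (nat \<Rightarrow> nat \<Rightarrow> nat)
   \<Rightarrow> (nat \<Rightarrow> nat \<Rightarrow> real^'n \<Rightarrow> ereal) \<Rightarrow> (nat \<Rightarrow> nat \<Rightarrow> nat \<Rightarrow> real^'n)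
   \<Rightarrow> (nat \<Rightarrow> nat \<Rightarrow> ereal) \<Rightarrow> (nat \<Rightarrow> nat \<Rightarrow> real^'n) \<Rightarrow> bool" where
  "sreda_run P lam xP Q0 xf sj Qk pig theta beta \<longleftrightarrow>
     (\<forall>t\<in>{2..horizon P}. Qk 0 t = Q0 t) \<and>
     (\<forall>k. Qk k (horizon P + 1) = (\<lambda>_. 0)) \<and>
     (\<forall>k\<ge>1. \<forall>t\<in>{2..horizon P}. sj k t < nreal P) \<and>
     (\<forall>k\<ge>1. \<forall>m. length m + 1 \<le> horizon P \<and> set m \<subseteq> {..<nreal P} \<longrightarrow>
        (let t = length m + 1;
             y = (if m = [] then x0 P else xf k (butlast m));
             j = (if m = [] then 0 else last m);
             F = (\<lambda>x. fc P t j (y, x) + Qk (k - 1) (t + 1) x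
                       + ereal (lam t k * (norm (x - xP t k))\<^sup>2))
         in xf k m \<in> Xfeas P t j y \<and> (\<forall>x\<in>Xfeas P t j y. F (xf k m) \<le> F x))) \<and>
     (\<forall>k\<ge>1. \<forall>t\<in>{2..horizon P}.
        (let xn = xf k (map (sj k) [2..<t]);
             Qlow = (\<lambda>j y. Inf ((\<lambda>x. fc P t j (y, x) + Qk k (t + 1) x) ` Xfeas P t j y))
         in (\<forall>j<nreal P. pig k t j \<in> esubgrad (Qlow j) xn) \<and>
            theta k t = (\<Sum>j<nreal P. ereal (prb P t j) * Qlow j xn) \<and>
            beta k t = (\<Sum>j<nreal P. prb P t j *\<^sub>R pig k t j) \<and>
            Qk k t = (\<lambda>y. max (Qk (k - 1) t y) (theta k t + ereal (beta k t \<bullet> (y - xn))))))"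

end

theory Submission
  imports Defs
begin


lemma cball_eq: "cball x e = (\<Union>y\<in>cball 0 e. {x + y})" for x :: "'a::real_normed_vector"
proof (rule set_eqI)
  fix z
  show "z \<in> cball x e \<longleftrightarrow> z \<in> (\<Union>y\<in>cball 0 e. {x + y})"
  proof
    assume "z \<in> cball x e"
    then have "norm (z - x) \<le> e" by (simp add: dist_norm norm_minus_commute)
    then have "z - x \<in> cball 0 e" by simp
    moreover have "z = x + (z - x)" by simp
    ultimately show "z \<in> (\<Union>y\<in>cball 0 e. {x + y})" by blast
  next
    assume "z \<in> (\<Union>y\<in>cball 0 e. {x + y})"
    then obtain y where "y \<in> cball 0 e" "z = x + y" by blast
    then show "z \<in> cball x e" by (simp add: dist_norm)
  qed
qed

lemma enl_eq: "enl S e = (\<Union>x\<in>S. \<Union>y\<in>cball 0 e. {x + y})" for S :: "'a::real_normed_vector set"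
  unfolding enl_def by (intro SUP_cong refl) (rule cball_eq)

lemma compact_enl: fixes S :: "'a::euclidean_space set"
  shows "compact S \<Longrightarrow> compact (enl S e)"
  unfolding enl_eq by (intro compact_sums') auto

lemma convex_enl: fixes S :: "'a::real_normed_vector set"
  shows "convex S \<Longrightarrow> convex (enl S e)"
  unfolding enl_eq by (intro convex_sums) auto

lemma subset_enl: "0 \<le> e \<Longrightarrow> S \<subseteq> enl S e"
  unfolding enl_def by auto

lemma enl_mono: "e1 \<le> e2 \<Longrightarrow> enl S e1 \<subseteq> enl S e2"
  unfolding enl_def by auto

lemma lsc_bdd_below:
  fixes f :: "'a::topological_space \<Rightarrow> ereal"
  assumes K: "compact K" and l: "elsc f" and nm: "\<forall>z\<in>K. f z \<noteq> -\<infinity>"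
  shows "\<exists>c. \<forall>z\<in>K. ereal c \<le> f z"
proof (rule ccontr)
  assume na: "\<not> ?thesis"
  have nb: "\<exists>z\<in>K. f z < ereal c" for c
  proof -
    from na have "\<not> (\<forall>z\<in>K. ereal c \<le> f z)" by blast
    then obtain z where "z \<in> K" "\<not> ereal c \<le> f z" by blast
    then show ?thesis using not_le by blast
  qed
  define C where "C n = {z. f z \<le> ereal (- real n)}" for n :: nat
  have clC: "closed (C n)" for n using l unfolding elsc_def C_def by blast
  have "K \<inter> \<Inter>(range C) \<noteq> {}"
  proof (rule compact_imp_fip[OF K])
    fix T assume "T \<in> range C" then show "closed T" using clC by blast
  next
    fix F' assume fin: "finite F'" and sub: "F' \<subseteq> range C"
    then obtain N where N: "finite N" "F' = C ` N" using finite_subset_image[OF fin sub] by blast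
    define m where "m = (if N = {} then 0 else Max N)"
    have mN: "n \<le> m" if "n \<in> N" for n
    proof -
      have "N \<noteq> {}" using that by blast
      then show ?thesis unfolding m_def using N(1) that by (simp add: Max_ge)
    qed
    obtain z where z: "z \<in> K" "f z < ereal (- real m)" using nb by blast
    have zC: "z \<in> C n" if "n \<in> N" for n
    proof -
      have "ereal (- real m) \<le> ereal (- real n)" using mN[OF that] by simp
      then have "f z \<le> ereal (- real n)" using z(2) by (meson less_imp_le order_trans)
      then show ?thesis unfolding C_def by simp
    qed
    have "z \<in> \<Inter>F'" unfolding N(2) using zC by blast
    then show "K \<inter> \<Inter>F' \<noteq> {}" using z(1) by blast
  qed
  then obtain z where z: "z \<in> K" "\<And>n. z \<in> C n" by blast
  have "f z \<le> ereal 0" using z(2)[of 0] unfolding C_def by simp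
  then have ni: "f z \<noteq> \<infinity>" by auto
  have nm': "f z \<noteq> -\<infinity>" using nm z(1) by blast
  obtain r where r: "f z = ereal r" using ni nm' by (cases "f z") simp_all
  obtain n :: nat where n: "real n > - r" using reals_Archimedean2 by blast
  have "f z \<le> ereal (- real n)" using z(2)[of n] unfolding C_def by simp
  then show False using r n by simp
qed

lemma ball_eq: "ball x e = (\<Union>y\<in>ball 0 e. {x + y})" for x :: "'a::real_normed_vector"
proof (rule set_eqI)
  fix z
  show "z \<in> ball x e \<longleftrightarrow> z \<in> (\<Union>y\<in>ball 0 e. {x + y})"
  proof
    assume "z \<in> ball x e"
    then have "norm (z - x) < e" by (simp add: dist_norm norm_minus_commute)
    then have "z - x \<in> ball 0 e" by simp
    moreover have "z = x + (z - x)" by simp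
    ultimately show "z \<in> (\<Union>y\<in>ball 0 e. {x + y})" by blast
  next
    assume "z \<in> (\<Union>y\<in>ball 0 e. {x + y})"
    then obtain y where "y \<in> ball 0 e" "z = x + y" by blast
    then show "z \<in> ball x e" by (simp add: dist_norm)
  qed
qed

lemma convex_bdd_above:
  fixes X :: "('a::euclidean_space) set"
  assumes X: "compact X" "convex X" and e: "0 < e" and cv: "convex_on (enl X e) v"
  shows "\<exists>C. \<forall>y\<in>enl X (e/2). v y \<le> C"
proof -
  define U where "U = (\<Union>x\<in>X. \<Union>y\<in>ball 0 e. {x + y})"
  have Ueq: "U = (\<Union>x\<in>X. ball x e)"
    unfolding U_def by (intro SUP_cong refl ball_eq[symmetric])
  have oU: "open U" unfolding Ueq by (rule open_UN) simp
  have cU: "convex U" unfolding U_def by (intro convex_sums X convex_ball)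
  have UE: "U \<subseteq> enl X e" unfolding Ueq enl_def by (intro UN_mono ball_subset_cball order.refl)
  have "continuous_on U v" using convex_on_continuous[OF oU convex_on_subset[OF cv UE cU]] .
  moreover have EU: "enl X (e/2) \<subseteq> U" unfolding Ueq enl_def
    by (intro UN_mono order.refl) (simp add: cball_subset_ball_iff e)
  ultimately have "continuous_on (enl X (e/2)) v" using continuous_on_subset by blast
  then have "compact (v ` enl X (e/2))" using compact_enl[OF X(1)] compact_continuous_image by blast
  then have "bounded (v ` enl X (e/2))" by (rule compact_imp_bounded)
  then obtain B where B: "\<forall>x\<in>v ` enl X (e/2). \<bar>x\<bar> \<le> B" unfolding bounded_real by blast
  have "\<forall>y\<in>enl X (e/2). v y \<le> B"
  proof
    fix y assume "y \<in> enl X (e/2)"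
    then have "\<bar>v y\<bar> \<le> B" using B by blast
    then show "v y \<le> B" by simp
  qed
  then show ?thesis by blast
qed



lemma econvex_comb:
  fixes f :: "'a::real_vector \<Rightarrow> ereal"
  assumes "econvex f" "f z1 = ereal a" "f z2 = ereal b" "0 \<le> u" "0 \<le> v" "u + v = 1"
  shows "f (u *\<^sub>R z1 + v *\<^sub>R z2) \<le> ereal (u * a + v * b)"
proof -
  have m: "(z1, a) \<in> {(x, r). f x \<le> ereal r}" "(z2, b) \<in> {(x, r). f x \<le> ereal r}" using assms(2,3) by simp_all
  have c: "convex {(x, r). f x \<le> ereal r}" using assms(1) unfolding econvex_def .
  have "u *\<^sub>R (z1, a) + v *\<^sub>R (z2, b) \<in> {(x, r). f x \<le> ereal r}"
    by (rule convexD[OF c m assms(4-6)])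
  then show ?thesis by simp
qed

definition Vf where "Vf P N t j y = Inf ((\<lambda>x. fc P t j (y, x) + N x) ` Xfeas P t j y)"

lemma H2_body:
  assumes "H2 P eps" "t \<in> {1..horizon P}"
  shows "Xc P t \<noteq> {} \<and> convex (Xc P t) \<and> compact (Xc P t) \<and>
     (\<forall>j\<in>supp P t. eproper (fc P t j) \<and> econvex (fc P t j) \<and> elsc (fc P t j)) \<and>
     (\<forall>j\<in>supp P t. \<forall>i. convex_on UNIV (\<lambda>z. gc P t j z $ i) \<and>
                         (\<forall>c. closed {z. gc P t j z $ i \<le> c})) \<and>
     (\<forall>j\<in>supp P t. enl (Xst P (t - 1)) eps \<times> Xc P t \<subseteq> edom (fc P t j) \<and>
                     (\<forall>y\<in>enl (Xst P (t - 1)) eps. Xfeas P t j y \<noteq> {})) \<and>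
     (2 \<le> t \<longrightarrow> (\<forall>j\<in>supp P t. \<exists>yb xb. yb \<in> Xst P (t - 1) \<and> xb \<in> rel_interior (Xc P t) \<and>
            (yb, xb) \<in> rel_interior {z. \<forall>i. gc P t j z $ i \<le> 0} \<and> xb \<in> Xfeas P t j yb))"
proof -
  have "\<forall>t\<in>{1..horizon P}. Xc P t \<noteq> {} \<and> convex (Xc P t) \<and> compact (Xc P t) \<and>
     (\<forall>j\<in>supp P t. eproper (fc P t j) \<and> econvex (fc P t j) \<and> elsc (fc P t j)) \<and>
     (\<forall>j\<in>supp P t. \<forall>i. convex_on UNIV (\<lambda>z. gc P t j z $ i) \<and>
                         (\<forall>c. closed {z. gc P t j z $ i \<le> c})) \<and>
     (\<forall>j\<in>supp P t. enl (Xst P (t - 1)) eps \<times> Xc P t \<subseteq> edom (fc P t j) \<and>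
                     (\<forall>y\<in>enl (Xst P (t - 1)) eps. Xfeas P t j y \<noteq> {})) \<and>
     (2 \<le> t \<longrightarrow> (\<forall>j\<in>supp P t. \<exists>yb xb. yb \<in> Xst P (t - 1) \<and> xb \<in> rel_interior (Xc P t) \<and>
            (yb, xb) \<in> rel_interior {z. \<forall>i. gc P t j z $ i \<le> 0} \<and> xb \<in> Xfeas P t j yb))" using assms(1) unfolding H2_def by (rule conjunct2)
  then show ?thesis using assms(2) by (rule bspec)
qed

lemma H2_at:
  assumes "H2 P eps" "t \<in> {1..horizon P}"
  shows "0 < eps" "Xc P t \<noteq> {}" "convex (Xc P t)" "compact (Xc P t)"
   "\<And>j. j \<in> supp P t \<Longrightarrow> eproper (fc P t j) \<and> econvex (fc P t j) \<and> elsc (fc P t j)"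
   "\<And>j i. j \<in> supp P t \<Longrightarrow> convex_on UNIV (\<lambda>z. gc P t j z $ i)"
   "\<And>j. j \<in> supp P t \<Longrightarrow> enl (Xst P (t - 1)) eps \<times> Xc P t \<subseteq> edom (fc P t j)"
   "\<And>j y. j \<in> supp P t \<Longrightarrow> y \<in> enl (Xst P (t - 1)) eps \<Longrightarrow> Xfeas P t j y \<noteq> {}"
proof -
  note B = H2_body[OF assms]
  show "0 < eps" using assms(1) unfolding H2_def by (rule conjunct1)
  show "Xc P t \<noteq> {}" using B by (rule conjunct1)
  show "convex (Xc P t)" using B by (elim conjE)
  show "compact (Xc P t)" using B by (elim conjE)
  show "\<And>j. j \<in> supp P t \<Longrightarrow> eproper (fc P t j) \<and> econvex (fc P t j) \<and> elsc (fc P t j)"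
    using B by (elim conjE) (erule bspec)
  show "\<And>j i. j \<in> supp P t \<Longrightarrow> convex_on UNIV (\<lambda>z. gc P t j z $ i)"
  proof -
    fix j i assume j: "j \<in> supp P t"
    have "\<forall>j\<in>supp P t. \<forall>i. convex_on UNIV (\<lambda>z. gc P t j z $ i) \<and> (\<forall>c. closed {z. gc P t j z $ i \<le> c})"
      using B by (elim conjE)
    then show "convex_on UNIV (\<lambda>z. gc P t j z $ i)" using j by blast
  qed
  have D: "\<forall>j\<in>supp P t. enl (Xst P (t - 1)) eps \<times> Xc P t \<subseteq> edom (fc P t j) \<and>
                     (\<forall>y\<in>enl (Xst P (t - 1)) eps. Xfeas P t j y \<noteq> {})"
    using B by (elim conjE)
  show "\<And>j. j \<in> supp P t \<Longrightarrow> enl (Xst P (t - 1)) eps \<times> Xc P t \<subseteq> edom (fc P t j)"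
    using D by blast
  show "\<And>j y. j \<in> supp P t \<Longrightarrow> y \<in> enl (Xst P (t - 1)) eps \<Longrightarrow> Xfeas P t j y \<noteq> {}"
    using D by blast
qed

lemma Xst_pos: "1 \<le> t \<Longrightarrow> Xst P t = Xc P t" by (simp add: Xst_def)
lemma supp_ge2: "2 \<le> t \<Longrightarrow> supp P t = {..<nreal P}" by (simp add: supp_def)
lemma Xfeas_sub: "Xfeas P t j y \<subseteq> Xc P t" by (auto simp: Xfeas_def)

lemma Vstage:
  assumes h2: "H2 P eps" and t: "2 \<le> t" "t \<le> horizon P" and j: "j < nreal P"
    and fin: "\<forall>x\<in>Xc P t. N x = ereal (qn x) \<and> c \<le> qn x"
    and cvx: "convex_on (Xc P t) qn"
  shows "\<exists>lo. \<forall>y\<in>enl (Xc P (t-1)) eps. \<exists>v. Vf P N t j y = ereal v \<and> lo \<le> v"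
    "convex_on (enl (Xc P (t-1)) eps) (\<lambda>y. real_of_ereal (Vf P N t j y))"
proof -
  define E where "E = enl (Xc P (t-1)) eps"
  have ts: "t \<in> {1..horizon P}" "t - 1 \<in> {1..horizon P}" using t by auto
  have js: "j \<in> supp P t" using j t by (simp add: supp_ge2)
  have XE: "Xst P (t-1) = Xc P (t-1)" using t by (simp add: Xst_pos)
  note H = H2_at[OF h2 ts(1)]
  note H' = H2_at[OF h2 ts(2)]
  have hf: "eproper (fc P t j)" "econvex (fc P t j)" "elsc (fc P t j)" using H(5)[OF js] by auto
  have dom: "E \<times> Xc P t \<subseteq> edom (fc P t j)" using H(7)[OF js] XE E_def by simp
  have ne: "\<And>y. y \<in> E \<Longrightarrow> Xfeas P t j y \<noteq> {}" using H(8)[OF js] XE E_def by simp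
  have gcv: "\<And>i. convex_on UNIV (\<lambda>z. gc P t j z $ i)" using H(6)[OF js] by simp
  have cE1: "compact E" unfolding E_def by (rule compact_enl[OF H'(4)])
  have cE2: "convex E" unfolding E_def by (rule convex_enl[OF H'(3)])
  have nmi: "\<forall>z\<in>E \<times> Xc P t. fc P t j z \<noteq> -\<infinity>" using hf(1) unfolding eproper_def by blast
  obtain cf where cf: "\<forall>z\<in>E \<times> Xc P t. ereal cf \<le> fc P t j z"
    using lsc_bdd_below[OF compact_Times[OF cE1 H(4)] hf(3) nmi] by blast
  define fr where "fr z = real_of_ereal (fc P t j z)" for z
  have ffin: "fc P t j z = ereal (fr z)" if "z \<in> E \<times> Xc P t" for z
  proof -
    have "fc P t j z < \<infinity>" using dom that unfolding edom_def by blast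
    moreover have "fc P t j z \<noteq> -\<infinity>" using hf(1) unfolding eproper_def by blast
    ultimately show ?thesis unfolding fr_def by (cases "fc P t j z") simp_all
  qed
  have frlo: "cf \<le> fr z" if "z \<in> E \<times> Xc P t" for z
  proof -
    have "ereal cf \<le> fc P t j z" using cf that by blast
    then show ?thesis using ffin[OF that] by simp
  qed
  have Fv: "fc P t j (y, x) + N x = ereal (fr (y, x) + qn x)" "cf + c \<le> fr (y, x) + qn x"
    if "y \<in> E" "x \<in> Xfeas P t j y" for y x
  proof -
    have x: "x \<in> Xc P t" using that(2) Xfeas_sub by blast
    have yx: "(y, x) \<in> E \<times> Xc P t" using that(1) x by simp
    have Nx: "N x = ereal (qn x)" "c \<le> qn x" using fin x by simp_all
    show "fc P t j (y, x) + N x = ereal (fr (y, x) + qn x)" by (simp add: ffin[OF yx] Nx(1))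
    show "cf + c \<le> fr (y, x) + qn x" using frlo[OF yx] Nx(2) by linarith
  qed
  have Vb: "\<exists>v. Vf P N t j y = ereal v \<and> cf + c \<le> v \<and> (\<forall>x\<in>Xfeas P t j y. v \<le> fr (y, x) + qn x) \<and>
          (\<forall>d>0. \<exists>x\<in>Xfeas P t j y. fr (y, x) + qn x < v + d)" if y: "y \<in> E" for y
  proof -
    obtain x0 where x0: "x0 \<in> Xfeas P t j y" using ne[OF y] by blast
    have "Vf P N t j y \<le> fc P t j (y, x0) + N x0" unfolding Vf_def using x0 by (rule INF_lower)
    then have up: "Vf P N t j y \<le> ereal (fr (y, x0) + qn x0)" using Fv(1)[OF y x0] by simp
    have lo: "ereal (cf + c) \<le> Vf P N t j y"
      unfolding Vf_def
    proof (rule INF_greatest)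
      fix x assume x: "x \<in> Xfeas P t j y"
      show "ereal (cf + c) \<le> fc P t j (y, x) + N x" using Fv[OF y x] by simp
    qed
    define v where "v = real_of_ereal (Vf P N t j y)"
    have Vv: "Vf P N t j y = ereal v" unfolding v_def using up lo by (cases "Vf P N t j y") simp_all
    show ?thesis
    proof (intro exI conjI ballI allI impI)
      show "Vf P N t j y = ereal v" by fact
      show "cf + c \<le> v" using lo Vv by simp
      fix x assume x: "x \<in> Xfeas P t j y"
      have "Vf P N t j y \<le> fc P t j (y, x) + N x" unfolding Vf_def using x by (rule INF_lower)
      then show "v \<le> fr (y, x) + qn x" using Vv Fv(1)[OF y x] by simp
    next
      fix d :: real assume d: "d > 0"
      have "Vf P N t j y < ereal (v + d)" using Vv d by simp
      then obtain x where x: "x \<in> Xfeas P t j y" "fc P t j (y, x) + N x < ereal (v + d)"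
        unfolding Vf_def INF_less_iff by blast
      have "fr (y, x) + qn x < v + d" using x(2) Fv(1)[OF y x(1)] by simp
      then show "\<exists>x\<in>Xfeas P t j y. fr (y, x) + qn x < v + d" using x(1) by blast
    qed
  qed
  show "\<exists>lo. \<forall>y\<in>enl (Xc P (t-1)) eps. \<exists>v. Vf P N t j y = ereal v \<and> lo \<le> v"
  proof (rule exI[of _ "cf + c"], rule ballI)
    fix y assume "y \<in> enl (Xc P (t-1)) eps"
    then have "y \<in> E" unfolding E_def .
    then obtain v where "Vf P N t j y = ereal v" "cf + c \<le> v" using Vb by blast
    then show "\<exists>v. Vf P N t j y = ereal v \<and> cf + c \<le> v" by blast
  qed
  show "convex_on (enl (Xc P (t-1)) eps) (\<lambda>y. real_of_ereal (Vf P N t j y))"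
    unfolding E_def[symmetric]
  proof (rule convex_onI[OF _ cE2])
    fix s :: real and y1 y2 assume s: "0 < s" "s < 1" and y: "y1 \<in> E" "y2 \<in> E"
    have s0: "0 \<le> 1 - s" "0 \<le> s" "(1 - s) + s = 1" using s by simp_all
    define y where "y = (1 - s) *\<^sub>R y1 + s *\<^sub>R y2"
    have yE: "y \<in> E" unfolding y_def by (rule convexD[OF cE2 y s0])
    obtain v1 where v1: "Vf P N t j y1 = ereal v1" "\<forall>d>0. \<exists>x\<in>Xfeas P t j y1. fr (y1, x) + qn x < v1 + d"
      using Vb[OF y(1)] by blast
    obtain v2 where v2: "Vf P N t j y2 = ereal v2" "\<forall>d>0. \<exists>x\<in>Xfeas P t j y2. fr (y2, x) + qn x < v2 + d"
      using Vb[OF y(2)] by blast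
    obtain v where v: "Vf P N t j y = ereal v" "\<forall>x\<in>Xfeas P t j y. v \<le> fr (y, x) + qn x"
      using Vb[OF yE] by blast
    have "v \<le> (1 - s) * v1 + s * v2"
    proof (rule field_le_epsilon)
      fix d :: real assume d: "0 < d"
      obtain x1 where x1: "x1 \<in> Xfeas P t j y1" "fr (y1, x1) + qn x1 < v1 + d" using v1(2) d by blast
      obtain x2 where x2: "x2 \<in> Xfeas P t j y2" "fr (y2, x2) + qn x2 < v2 + d" using v2(2) d by blast
      define x where "x = (1 - s) *\<^sub>R x1 + s *\<^sub>R x2"
      have x12: "x1 \<in> Xc P t" "x2 \<in> Xc P t" using x1(1) x2(1) Xfeas_sub by blast+
      have xC: "x \<in> Xc P t" unfolding x_def by (rule convexD[OF H(3) x12 s0])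
      have yx: "(y, x) = (1 - s) *\<^sub>R (y1, x1) + s *\<^sub>R (y2, x2)" unfolding x_def y_def by simp
      have gle: "gc P t j (y, x) $ i \<le> 0" for i
      proof -
        have "gc P t j ((1 - s) *\<^sub>R (y1, x1) + s *\<^sub>R (y2, x2)) $ i
              \<le> (1 - s) * gc P t j (y1, x1) $ i + s * gc P t j (y2, x2) $ i"
          by (rule convex_onD[OF gcv]) (use s in simp_all)
        moreover have "gc P t j (y1, x1) $ i \<le> 0" "gc P t j (y2, x2) $ i \<le> 0"
          using x1(1) x2(1) unfolding Xfeas_def by blast+
        moreover have "(1 - s) * gc P t j (y1, x1) $ i \<le> 0" "s * gc P t j (y2, x2) $ i \<le> 0"
          using calculation(2,3) s0 by (simp_all add: mult_nonneg_nonpos)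
        ultimately show ?thesis unfolding yx by linarith
      qed
      have eq1: "Ac P t j *v x1 + Bc P t j *v y1 = bc P t j" and eq2: "Ac P t j *v x2 + Bc P t j *v y2 = bc P t j"
        using x1(1) x2(1) unfolding Xfeas_def by blast+
      have "Ac P t j *v x + Bc P t j *v y
          = (1 - s) *\<^sub>R (Ac P t j *v x1 + Bc P t j *v y1) + s *\<^sub>R (Ac P t j *v x2 + Bc P t j *v y2)"
        unfolding x_def y_def by (simp add: matrix_vector_right_distrib matrix_vector_mult_scaleR scaleR_add_right)
      also have "\<dots> = ((1 - s) + s) *\<^sub>R bc P t j" unfolding eq1 eq2 by (rule scaleR_add_left[symmetric])
      also have "\<dots> = bc P t j" by simp
      finally have eqx: "Ac P t j *v x + Bc P t j *v y = bc P t j" .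
      have xF: "x \<in> Xfeas P t j y" unfolding Xfeas_def using xC gle eqx by blast
      have f1: "fc P t j (y1, x1) = ereal (fr (y1, x1))" "fc P t j (y2, x2) = ereal (fr (y2, x2))"
        by (rule ffin, simp add: y(1) x12(1)) (rule ffin, simp add: y(2) x12(2))
      have "fc P t j ((1 - s) *\<^sub>R (y1, x1) + s *\<^sub>R (y2, x2)) \<le> ereal ((1 - s) * fr (y1, x1) + s * fr (y2, x2))"
        by (rule econvex_comb[OF hf(2) f1 s0])
      then have "fc P t j (y, x) \<le> ereal ((1 - s) * fr (y1, x1) + s * fr (y2, x2))" unfolding yx .
      moreover have "fc P t j (y, x) = ereal (fr (y, x))" by (rule ffin) (simp add: yE xC)
      ultimately have fle: "fr (y, x) \<le> (1 - s) * fr (y1, x1) + s * fr (y2, x2)" by simp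
      have qle: "qn x \<le> (1 - s) * qn x1 + s * qn x2"
        unfolding x_def by (rule convex_onD[OF cvx]) (use s x12 in simp_all)
      have "v \<le> fr (y, x) + qn x" using v(2) xF by blast
      also have "\<dots> \<le> (1 - s) * (fr (y1, x1) + qn x1) + s * (fr (y2, x2) + qn x2)"
        using fle qle by (simp add: algebra_simps)
      also have "\<dots> \<le> (1 - s) * (v1 + d) + s * (v2 + d)"
      proof -
        have "(1 - s) * (fr (y1, x1) + qn x1) \<le> (1 - s) * (v1 + d)"
          using x1(2) s0 by (intro mult_left_mono) simp_all
        moreover have "s * (fr (y2, x2) + qn x2) \<le> s * (v2 + d)"
          using x2(2) s0 by (intro mult_left_mono) simp_all
        ultimately show ?thesis by linarith
      qed
      also have "\<dots> = (1 - s) * v1 + s * v2 + d" by (simp add: algebra_simps)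
      finally show "v \<le> (1 - s) * v1 + s * v2 + d" .
    qed
    then show "real_of_ereal (Vf P N t j ((1 - s) *\<^sub>R y1 + s *\<^sub>R y2))
          \<le> (1 - s) * real_of_ereal (Vf P N t j y1) + s * real_of_ereal (Vf P N t j y2)"
      using v(1) v1(1) v2(1) unfolding y_def by simp
  qed
qed



lemma Qcal_unfold:
  assumes "2 \<le> t" "t \<le> horizon P"
  shows "Qcal P t y = (\<Sum>j<nreal P. ereal (prb P t j) * Vf P (Qcal P (t+1)) t j y)"
proof -
  have e1: "horizon P + 1 - t = Suc (horizon P - t)" using assms by simp
  have e2: "horizon P - (horizon P - t) = t" using assms by simp
  have e3: "horizon P + 1 - (t + 1) = horizon P - t" by simp
  have "Qcal P (t+1) = Qs P (horizon P - t)" unfolding Qcal_def e3 ..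
  then show ?thesis unfolding Qcal_def e1 using assms
    by (simp add: e2 supp_def pr_def Vf_def Let_def Qcal_def)
qed

lemma Qcal_last: "Qcal P (horizon P + 1) y = 0"
  by (simp add: Qcal_def)

lemma convex_on_sum_fun:
  assumes "finite I" "convex S" "\<forall>i\<in>I. 0 \<le> a i \<and> convex_on S (f i)"
  shows "convex_on S (\<lambda>x. \<Sum>i\<in>I. a i * f i x)"
  using assms
proof (induction I rule: finite_induct)
  case empty then show ?case by (simp add: convex_on_const)
next
  case (insert i I)
  then show ?case by (simp add: convex_on_add convex_on_cmul)
qed

lemma H1_prb: "H1 P \<Longrightarrow> 2 \<le> t \<Longrightarrow> t \<le> horizon P \<Longrightarrow> j < nreal P \<Longrightarrow> 0 < prb P t j"
  unfolding H1_def by auto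

lemma Qcal_good:
  assumes h1: "H1 P" and h2: "H2 P eps" and t: "2 \<le> t" "t \<le> horizon P + 1"
  shows "\<exists>qc lo. (\<forall>y\<in>enl (Xc P (t-1)) eps. Qcal P t y = ereal (qc y) \<and> lo \<le> qc y)
            \<and> convex_on (enl (Xc P (t-1)) eps) qc"
  using t
proof (induction "horizon P + 1 - t" arbitrary: t)
  case 0
  then have tt: "t = horizon P + 1" by simp
  have T1: "1 \<le> horizon P" using h1 unfolding H1_def by simp
  have "t - 1 \<in> {1..horizon P}" using tt T1 by auto
  then have "convex (Xc P (t - 1))" by (rule H2_at(3)[OF h2])
  then have "convex (enl (Xc P (t-1)) eps)" by (rule convex_enl)
  then show ?case using tt Qcal_last[of P]
    by (intro exI[of _ "\<lambda>_. 0"] exI[of _ 0]) (auto simp: convex_on_const zero_ereal_def)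
next
  case (Suc s)
  then have tT: "t \<le> horizon P" by simp
  have "s = horizon P + 1 - (t + 1)" using Suc by simp
  then obtain qc lo where qc: "\<forall>y\<in>enl (Xc P t) eps. Qcal P (t+1) y = ereal (qc y) \<and> lo \<le> qc y"
      and qcc: "convex_on (enl (Xc P t) eps) qc"
  proof -
    have "2 \<le> t + 1" "t + 1 \<le> horizon P + 1" using Suc(3) tT by simp_all
    from Suc(1)[OF \<open>s = horizon P + 1 - (t + 1)\<close> this] show ?thesis
      using that by (simp only: diff_add_inverse2 add_diff_cancel_right') blast
  qed
  have eps: "0 < eps" using h2 unfolding H2_def by simp
  have Xsub: "Xc P t \<subseteq> enl (Xc P t) eps" using eps subset_enl[of eps "Xc P t"] by auto
  have "t \<in> {1..horizon P}" using Suc(3) tT by simp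
  then have cX: "convex (Xc P t)" by (rule H2_at(3)[OF h2])
  have fin: "\<forall>x\<in>Xc P t. Qcal P (t+1) x = ereal (qc x) \<and> lo \<le> qc x" using qc Xsub by auto
  have cvx: "convex_on (Xc P t) qc" using convex_on_subset[OF qcc Xsub cX] .
  define E where "E = enl (Xc P (t-1)) eps"
  note V = Vstage[OF h2 Suc(3) tT _ fin cvx]
  have "\<forall>j\<in>{..<nreal P}. \<exists>lo. \<forall>y\<in>E. \<exists>v. Vf P (Qcal P (t+1)) t j y = ereal v \<and> lo \<le> v"
  proof
    fix j assume "j \<in> {..<nreal P}"
    then have "j < nreal P" by simp
    from V(1)[OF this] show "\<exists>lo. \<forall>y\<in>E. \<exists>v. Vf P (Qcal P (t+1)) t j y = ereal v \<and> lo \<le> v"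
      unfolding E_def .
  qed
  then obtain L where L0: "\<forall>j\<in>{..<nreal P}. \<forall>y\<in>E. \<exists>v. Vf P (Qcal P (t+1)) t j y = ereal v \<and> L j \<le> v"
    by (rule bchoice[THEN exE]) 
  have L: "\<exists>v. Vf P (Qcal P (t+1)) t j y = ereal v \<and> L j \<le> v" if "j < nreal P" "y \<in> E" for j y
    using L0 that by simp
  define vr where "vr j y = real_of_ereal (Vf P (Qcal P (t+1)) t j y)" for j y
  have Vr: "Vf P (Qcal P (t+1)) t j y = ereal (vr j y)" "L j \<le> vr j y" if "j < nreal P" "y \<in> E" for j y
    using L[OF that] unfolding vr_def by auto
  have pp: "\<And>j. j < nreal P \<Longrightarrow> 0 \<le> prb P t j" using H1_prb[OF h1 Suc(3) tT] less_imp_le by blast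
  have "t - 1 \<in> {1..horizon P}" using Suc(3) tT by auto
  then have "convex (Xc P (t-1))" by (rule H2_at(3)[OF h2])
  then have cE: "convex E" unfolding E_def by (rule convex_enl)
  show ?case
  proof (intro exI conjI ballI)
    fix y assume y: "y \<in> enl (Xc P (t-1)) eps"
    then have yE: "y \<in> E" unfolding E_def .
    have "Qcal P t y = (\<Sum>j<nreal P. ereal (prb P t j) * ereal (vr j y))"
      unfolding Qcal_unfold[OF Suc(3) tT] using Vr(1)[OF _ yE] by (intro sum.cong) auto
    also have "\<dots> = ereal (\<Sum>j<nreal P. prb P t j * vr j y)" by simp
    finally show "Qcal P t y = ereal (\<Sum>j<nreal P. prb P t j * vr j y)" .
    show "(\<Sum>j<nreal P. prb P t j * L j) \<le> (\<Sum>j<nreal P. prb P t j * vr j y)"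
      using Vr(2)[OF _ yE] pp by (intro sum_mono mult_left_mono) auto
  next
    show "convex_on (enl (Xc P (t-1)) eps) (\<lambda>y. \<Sum>j<nreal P. prb P t j * vr j y)"
      using V(2) pp cE unfolding E_def[symmetric] vr_def by (intro convex_on_sum_fun) auto
  qed
qed



lemma econvex_max: "econvex f \<Longrightarrow> econvex g \<Longrightarrow> econvex (\<lambda>x. max (f x) (g x))"
proof -
  assume a: "econvex f" "econvex g"
  have "{(x, r). max (f x) (g x) \<le> ereal r} = {(x, r). f x \<le> ereal r} \<inter> {(x, r). g x \<le> ereal r}" by auto
  then show ?thesis using a unfolding econvex_def by (simp add: convex_Int)
qed

lemma econvex_aff:
  fixes b x0 :: "'a::real_inner" and c :: real
  shows "econvex (\<lambda>y. ereal (c + inner b (y - x0)))"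
proof -
  have "{(y, r). ereal (c + inner b (y - x0)) \<le> ereal r} = {z. inner (b, -1::real) z \<le> inner b x0 - c}"
    by (auto simp: inner_diff_right)
  then show ?thesis unfolding econvex_def by (simp add: convex_halfspace_le)
qed

lemma econvex_zero: "econvex (\<lambda>y::'a::real_inner. 0::ereal)"
proof -
  have "{(y::'a::real_inner, r). (0::ereal) \<le> ereal r} = {z. inner (0::'a, -1::real) z \<le> 0}"
    by auto
  then show ?thesis unfolding econvex_def by (simp add: convex_halfspace_le)
qed

lemma econvex_minf: "\<forall>x. f x = -\<infinity> \<Longrightarrow> econvex f"
proof -
  assume "\<forall>x. f x = -\<infinity>"
  then have "{(x, r). f x \<le> ereal r} = UNIV" by auto
  then show ?thesis unfolding econvex_def by simp
qed

lemma lipschitz_max: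
  fixes q1 q2 :: "'a::metric_space \<Rightarrow> real"
  assumes "lipschitz_on L1 S q1" "lipschitz_on L2 S q2"
  shows "lipschitz_on (max L1 L2) S (\<lambda>x. max (q1 x) (q2 x))"
proof (rule lipschitz_onI)
  show "0 \<le> max L1 L2" using lipschitz_on_nonneg[OF assms(1)] by simp
  fix x y assume xy: "x \<in> S" "y \<in> S"
  have "L1 * dist x y \<le> max L1 L2 * dist x y" "L2 * dist x y \<le> max L1 L2 * dist x y"
    by (intro mult_right_mono; simp)+
  moreover have "dist (q1 x) (q1 y) \<le> L1 * dist x y" "dist (q2 x) (q2 y) \<le> L2 * dist x y"
    using lipschitz_onD[OF assms(1) xy] lipschitz_onD[OF assms(2) xy] by auto
  ultimately show "dist (max (q1 x) (q2 x)) (max (q1 y) (q2 y)) \<le> max L1 L2 * dist x y"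
    unfolding dist_real_def by (smt (verit))
qed

lemma lipschitz_aff:
  fixes b x0 :: "'a::real_inner" and c :: real
  shows "lipschitz_on (norm b) S (\<lambda>y. c + inner b (y - x0))"
proof (rule lipschitz_onI)
  fix x y
  have "dist (c + inner b (x - x0)) (c + inner b (y - x0)) = \<bar>inner b (x - y)\<bar>"
    by (simp add: dist_real_def inner_diff_right)
  also have "\<dots> \<le> norm b * norm (x - y)" by (rule Cauchy_Schwarz_ineq2)
  finally show "dist (c + inner b (x - x0)) (c + inner b (y - x0)) \<le> norm b * dist x y"
    by (simp add: dist_norm)
qed simp

lemma Vf_mono:
  assumes "\<forall>x\<in>Xc P t. N1 x \<le> N2 x" shows "Vf P N1 t j y \<le> Vf P N2 t j y"
  unfolding Vf_def
proof (rule INF_superset_mono)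
  fix x assume "x \<in> Xfeas P t j y"
  then have "N1 x \<le> N2 x" using assms Xfeas_sub by blast
  then show "fc P t j (y, x) + N1 x \<le> fc P t j (y, x) + N2 x" by (rule add_left_mono)
qed simp

locale srun =
  fixes P :: "('n::finite,'m::finite,'c::finite) msp"
    and eps :: real
    and lam :: "nat \<Rightarrow> nat \<Rightarrow> real"
    and xP :: "nat \<Rightarrow> nat \<Rightarrow> real^'n"
    and Q0 :: "nat \<Rightarrow> real^'n \<Rightarrow> ereal"
    and xf :: "nat \<Rightarrow> nat list \<Rightarrow> real^'n"
    and sj :: "nat \<Rightarrow> nat \<Rightarrow> nat"
    and Qk :: "nat \<Rightarrow> nat \<Rightarrow> real^'n \<Rightarrow> ereal"
    and pig :: "nat \<Rightarrow> nat \<Rightarrow> nat \<Rightarrow> real^'n"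
    and theta :: "nat \<Rightarrow> nat \<Rightarrow> ereal"
    and beta :: "nat \<Rightarrow> nat \<Rightarrow> real^'n"
  assumes h1: "H1 P"
    and h2: "H2 P eps"
    and Q0h: "\<forall>t\<in>{2..horizon P}. (\<forall>x. Q0 t x = -\<infinity>) \<or>
               (econvex (Q0 t) \<and>
                (\<exists>L q. lipschitz_on L (enl (Xst P (t - 1)) eps) q \<and>
                       (\<forall>x\<in>enl (Xst P (t - 1)) eps. Q0 t x = ereal (q x))) \<and>
                (\<forall>x\<in>enl (Xst P (t - 1)) eps. Q0 t x \<le> Qcal P t x))"
    and run: "sreda_run P lam xP Q0 xf sj Qk pig theta beta"
begin

lemma R1: "\<forall>t\<in>{2..horizon P}. Qk 0 t = Q0 t"
  using run unfolding sreda_run_def by (rule conjunct1)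
lemma R2: "\<forall>k. Qk k (horizon P + 1) = (\<lambda>_. 0)"
  using run unfolding sreda_run_def by (elim conjE)
lemma R3: "\<forall>k\<ge>1. \<forall>t\<in>{2..horizon P}. sj k t < nreal P"
  using run unfolding sreda_run_def by (elim conjE)
lemma R4: "\<forall>k\<ge>1. \<forall>m. length m + 1 \<le> horizon P \<and> set m \<subseteq> {..<nreal P} \<longrightarrow>
        (let t = length m + 1;
             y = (if m = [] then x0 P else xf k (butlast m));
             j = (if m = [] then 0 else last m);
             F = (\<lambda>x. fc P t j (y, x) + Qk (k - 1) (t + 1) x
                       + ereal (lam t k * (norm (x - xP t k))\<^sup>2))
         in xf k m \<in> Xfeas P t j y \<and> (\<forall>x\<in>Xfeas P t j y. F (xf k m) \<le> F x))"
  using run unfolding sreda_run_def by (elim conjE)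
lemma R5: "\<forall>k\<ge>1. \<forall>t\<in>{2..horizon P}.
        (let xn = xf k (map (sj k) [2..<t]);
             Qlow = (\<lambda>j y. Inf ((\<lambda>x. fc P t j (y, x) + Qk k (t + 1) x) ` Xfeas P t j y))
         in (\<forall>j<nreal P. pig k t j \<in> esubgrad (Qlow j) xn) \<and>
            theta k t = (\<Sum>j<nreal P. ereal (prb P t j) * Qlow j xn) \<and>
            beta k t = (\<Sum>j<nreal P. prb P t j *\<^sub>R pig k t j) \<and>
            Qk k t = (\<lambda>y. max (Qk (k - 1) t y) (theta k t + ereal (beta k t \<bullet> (y - xn)))))"
  using run unfolding sreda_run_def by (elim conjE)

lemma eps_pos: "0 < eps" using h2 unfolding H2_def by simp

definition xn where "xn k t = xf k (map (sj k) [2..<t])"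
definition ak where "ak k t j = real_of_ereal (Vf P (Qk k (t+1)) t j (xn k t))"
definition th where "th k t = (\<Sum>j<nreal P. prb P t j * ak k t j)"

lemma xn_in:
  assumes k: "1 \<le> k" and t: "2 \<le> t" "t \<le> horizon P"
  shows "xn k t \<in> Xc P (t - 1)"
proof -
  let ?m = "map (sj k) [2..<t]"
  have len: "length ?m + 1 = t - 1" using t by simp
  have c: "length ?m + 1 \<le> horizon P \<and> set ?m \<subseteq> {..<nreal P}" using R3 k t by auto
  have "xf k ?m \<in> Xfeas P (length ?m + 1) (if ?m = [] then 0 else last ?m)
           (if ?m = [] then x0 P else xf k (butlast ?m))"
    using R4[rule_format, OF k c] unfolding Let_def by (rule conjunct1)
  then have "xf k ?m \<in> Xc P (length ?m + 1)" using Xfeas_sub by blast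
  then show ?thesis unfolding xn_def len .
qed

lemma cut:
  assumes k: "1 \<le> k" and t: "2 \<le> t" "t \<le> horizon P"
  shows "\<forall>j<nreal P. Vf P (Qk k (t+1)) t j (xn k t) = ereal (ak k t j)"
    "\<forall>j<nreal P. \<forall>y. ereal (ak k t j + inner (pig k t j) (y - xn k t)) \<le> Vf P (Qk k (t+1)) t j y"
    "theta k t = ereal (th k t)"
    "beta k t = (\<Sum>j<nreal P. prb P t j *\<^sub>R pig k t j)"
    "Qk k t = (\<lambda>y. max (Qk (k - 1) t y) (ereal (th k t + inner (beta k t) (y - xn k t))))"
    "\<forall>y. ereal (th k t + inner (beta k t) (y - xn k t))
          \<le> (\<Sum>j<nreal P. ereal (prb P t j) * Vf P (Qk k (t+1)) t j y)"
proof -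
  have tt: "t \<in> {2..horizon P}" using t by simp
  have R: "(\<forall>j<nreal P. pig k t j \<in> esubgrad (Vf P (Qk k (t+1)) t j) (xn k t)) \<and>
           theta k t = (\<Sum>j<nreal P. ereal (prb P t j) * Vf P (Qk k (t+1)) t j (xn k t)) \<and>
           beta k t = (\<Sum>j<nreal P. prb P t j *\<^sub>R pig k t j) \<and>
           Qk k t = (\<lambda>y. max (Qk (k - 1) t y) (theta k t + ereal (beta k t \<bullet> (y - xn k t))))"
    using R5[rule_format, OF k tt] unfolding Let_def Vf_def xn_def .
  note Ra = R[THEN conjunct1] and Rb = R[THEN conjunct2, THEN conjunct1]
    and Rc = R[THEN conjunct2, THEN conjunct2, THEN conjunct1]
    and Rd = R[THEN conjunct2, THEN conjunct2, THEN conjunct2]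
  have sg: "\<bar>Vf P (Qk k (t+1)) t j (xn k t)\<bar> \<noteq> \<infinity> \<and>
     (\<forall>y. Vf P (Qk k (t+1)) t j (xn k t) + ereal (pig k t j \<bullet> (y - xn k t)) \<le> Vf P (Qk k (t+1)) t j y)"
    if "j < nreal P" for j
  proof -
    have "pig k t j \<in> esubgrad (Vf P (Qk k (t+1)) t j) (xn k t)" using Ra that by blast
    then show ?thesis unfolding esubgrad_def by (rule CollectD)
  qed
  show c1: "\<forall>j<nreal P. Vf P (Qk k (t+1)) t j (xn k t) = ereal (ak k t j)"
  proof (intro allI impI)
    fix j assume j: "j < nreal P"
    have "\<bar>Vf P (Qk k (t+1)) t j (xn k t)\<bar> \<noteq> \<infinity>" using sg[OF j] by (rule conjunct1)
    then show "Vf P (Qk k (t+1)) t j (xn k t) = ereal (ak k t j)" unfolding ak_def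
      by (cases "Vf P (Qk k (t+1)) t j (xn k t)") simp_all
  qed
  show c2: "\<forall>j<nreal P. \<forall>y. ereal (ak k t j + inner (pig k t j) (y - xn k t)) \<le> Vf P (Qk k (t+1)) t j y"
  proof (intro allI impI)
    fix j y assume j: "j < nreal P"
    have "Vf P (Qk k (t+1)) t j (xn k t) + ereal (pig k t j \<bullet> (y - xn k t)) \<le> Vf P (Qk k (t+1)) t j y"
      using sg[OF j, THEN conjunct2] by (rule spec)
    then show "ereal (ak k t j + inner (pig k t j) (y - xn k t)) \<le> Vf P (Qk k (t+1)) t j y"
      using c1 j by simp
  qed
  have "theta k t = (\<Sum>j<nreal P. ereal (prb P t j) * Vf P (Qk k (t+1)) t j (xn k t))"
    by (rule Rb)
  also have "\<dots> = (\<Sum>j<nreal P. ereal (prb P t j * ak k t j))"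
  proof (rule sum.cong[OF refl])
    fix j assume "j \<in> {..<nreal P}"
    then have "Vf P (Qk k (t+1)) t j (xn k t) = ereal (ak k t j)" using c1 by blast
    then show "ereal (prb P t j) * Vf P (Qk k (t+1)) t j (xn k t) = ereal (prb P t j * ak k t j)" by simp
  qed
  also have "\<dots> = ereal (th k t)" unfolding th_def by simp
  finally show c3: "theta k t = ereal (th k t)" .
  show c4: "beta k t = (\<Sum>j<nreal P. prb P t j *\<^sub>R pig k t j)" by (rule Rc)
  show "Qk k t = (\<lambda>y. max (Qk (k - 1) t y) (ereal (th k t + inner (beta k t) (y - xn k t))))"
    unfolding Rd c3 by simp
  show "\<forall>y. ereal (th k t + inner (beta k t) (y - xn k t))
          \<le> (\<Sum>j<nreal P. ereal (prb P t j) * Vf P (Qk k (t+1)) t j y)"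
  proof
    fix y
    let ?d = "y - xn k t"
    have "th k t + inner (beta k t) ?d = (\<Sum>j<nreal P. prb P t j * (ak k t j + inner (pig k t j) ?d))"
      unfolding th_def c4 by (simp add: inner_sum_left sum.distrib distrib_left)
    then have "ereal (th k t + inner (beta k t) ?d)
        = (\<Sum>j<nreal P. ereal (prb P t j) * ereal (ak k t j + inner (pig k t j) ?d))"
      by simp
    also have "\<dots> \<le> (\<Sum>j<nreal P. ereal (prb P t j) * Vf P (Qk k (t+1)) t j y)"
    proof (rule sum_mono)
      fix j assume "j \<in> {..<nreal P}"
      then have j: "j < nreal P" by simp
      have "0 \<le> prb P t j" using H1_prb[OF h1 t j] by simp
      then show "ereal (prb P t j) * ereal (ak k t j + inner (pig k t j) ?d)
          \<le> ereal (prb P t j) * Vf P (Qk k (t+1)) t j y"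
        using c2 j by (intro ereal_mult_left_mono) auto
    qed
    finally show "ereal (th k t + inner (beta k t) ?d)
        \<le> (\<Sum>j<nreal P. ereal (prb P t j) * Vf P (Qk k (t+1)) t j y)" .
  qed
qed

end


context srun begin
end


lemma max_ereal_ereal: "max (ereal a) (ereal b) = ereal (max a b)"
  by (simp add: max_def)

lemma Qcal_last': "Qcal P (Suc (horizon P)) y = 0"
  by (simp add: Qcal_def)

lemma max_minf: "max (-\<infinity>) (x::ereal) = x"
  by (simp add: max_def)

context srun begin

lemma Xc_sub_enl: "Xc P t \<subseteq> enl (Xc P t) eps"
  using subset_enl[of eps "Xc P t"] eps_pos by simp

lemma Q0_disj:
  assumes tt: "t \<in> {2..horizon P}"
  shows "(\<forall>x. Q0 t x = -\<infinity>) \<or> (econvex (Q0 t) \<and>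
                (\<exists>L q. lipschitz_on L (enl (Xc P (t - 1)) eps) q \<and>
                       (\<forall>x\<in>enl (Xc P (t - 1)) eps. Q0 t x = ereal (q x))) \<and>
                (\<forall>x\<in>enl (Xc P (t - 1)) eps. Q0 t x \<le> Qcal P t x))"
proof -
  have "1 \<le> t - 1" using tt by auto
  then have XE: "Xst P (t-1) = Xc P (t-1)" by (rule Xst_pos)
  from Q0h tt have "(\<forall>x. Q0 t x = -\<infinity>) \<or> (econvex (Q0 t) \<and>
                (\<exists>L q. lipschitz_on L (enl (Xst P (t - 1)) eps) q \<and>
                       (\<forall>x\<in>enl (Xst P (t - 1)) eps. Q0 t x = ereal (q x))) \<and>
                (\<forall>x\<in>enl (Xst P (t - 1)) eps. Q0 t x \<le> Qcal P t x))" by (rule bspec)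
  then show ?thesis unfolding XE .
qed

lemma partA0:
  assumes t: "t \<in> {2..horizon P + 1}"
  shows "econvex (Qk 0 t) \<and> (\<forall>x\<in>enl (Xc P (t-1)) eps. Qk 0 t x \<le> Qcal P t x)"
proof (cases "t = horizon P + 1")
  case True
  have "Qk 0 t = (\<lambda>_. 0)" using R2 True by simp
  then show ?thesis using True by (simp add: econvex_zero Qcal_last')
next
  case False
  then have tt: "t \<in> {2..horizon P}" using t by simp
  have Q: "Qk 0 t = Q0 t" using R1 tt by blast
  from Q0_disj[OF tt] show ?thesis
  proof (elim disjE conjE)
    assume m: "\<forall>x. Q0 t x = -\<infinity>"
    show ?thesis unfolding Q
    proof (rule conjI)
      show "econvex (Q0 t)" by (rule econvex_minf[OF m])
      show "\<forall>x\<in>enl (Xc P (t-1)) eps. Q0 t x \<le> Qcal P t x" using m by simp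
    qed
  next
    assume "econvex (Q0 t)" "\<forall>x\<in>enl (Xc P (t - 1)) eps. Q0 t x \<le> Qcal P t x"
    then show ?thesis unfolding Q by blast
  qed
qed

lemma cutS:
  assumes t: "2 \<le> t" "t \<le> horizon P"
  shows "Qk (Suc k) t = (\<lambda>y. max (Qk k t y) (ereal (th (Suc k) t + inner (beta (Suc k) t) (y - xn (Suc k) t))))"
proof -
  have k1: "1 \<le> Suc k" by simp
  show ?thesis using cut(5)[OF k1 t] by simp
qed

lemma partA_step:
  assumes IH: "\<forall>t\<in>{2..horizon P + 1}. econvex (Qk k t) \<and> (\<forall>x\<in>enl (Xc P (t-1)) eps. Qk k t x \<le> Qcal P t x)"
  shows "t \<in> {2..horizon P + 1} \<Longrightarrow> econvex (Qk (Suc k) t) \<and> (\<forall>x\<in>enl (Xc P (t-1)) eps. Qk (Suc k) t x \<le> Qcal P t x)"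
proof (induction "horizon P + 1 - t" arbitrary: t)
  case 0
  then have tt: "t = horizon P + 1" by simp
  have "Qk (Suc k) t = (\<lambda>_. 0)" using R2 tt by simp
  then show ?case using tt by (simp add: econvex_zero Qcal_last')
next
  case (Suc s)
  then have t: "2 \<le> t" "t \<le> horizon P" by auto
  have ss: "s = horizon P + 1 - (t + 1)" using Suc(2) by simp
  have t1: "t + 1 \<in> {2..horizon P + 1}" using t by simp
  have IH2: "\<forall>x\<in>enl (Xc P t) eps. Qk (Suc k) (t+1) x \<le> Qcal P (t+1) x"
    using Suc(1)[OF ss t1] by (simp only: add_diff_cancel_right') blast
  have IHt: "econvex (Qk k t) \<and> (\<forall>x\<in>enl (Xc P (t-1)) eps. Qk k t x \<le> Qcal P t x)"
    using IH t by simp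
  note Qeq = cutS[OF t, of k]
  note C = cut[OF _ t, of "Suc k", simplified]
  show ?case
  proof
    show "econvex (Qk (Suc k) t)" unfolding Qeq by (rule econvex_max[OF IHt[THEN conjunct1] econvex_aff])
    show "\<forall>x\<in>enl (Xc P (t-1)) eps. Qk (Suc k) t x \<le> Qcal P t x"
    proof
      fix y assume y: "y \<in> enl (Xc P (t-1)) eps"
      have a: "Qk k t y \<le> Qcal P t y" using IHt y by blast
      have "ereal (th (Suc k) t + inner (beta (Suc k) t) (y - xn (Suc k) t))
          \<le> (\<Sum>j<nreal P. ereal (prb P t j) * Vf P (Qk (Suc k) (t+1)) t j y)"
        using cut(6)[OF _ t, of "Suc k"] by simp
      also have "\<dots> \<le> (\<Sum>j<nreal P. ereal (prb P t j) * Vf P (Qcal P (t+1)) t j y)"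
      proof (rule sum_mono)
        fix j assume "j \<in> {..<nreal P}"
        then have j: "j < nreal P" by simp
        have "Vf P (Qk (Suc k) (t+1)) t j y \<le> Vf P (Qcal P (t+1)) t j y"
        proof (rule Vf_mono)
          show "\<forall>x\<in>Xc P t. Qk (Suc k) (t + 1) x \<le> Qcal P (t + 1) x" using IH2 Xc_sub_enl by blast
        qed
        moreover have "0 \<le> ereal (prb P t j)" using H1_prb[OF h1 t j] by simp
        ultimately show "ereal (prb P t j) * Vf P (Qk (Suc k) (t+1)) t j y
            \<le> ereal (prb P t j) * Vf P (Qcal P (t+1)) t j y" by (rule ereal_mult_left_mono)
      qed
      also have "\<dots> = Qcal P t y" by (rule Qcal_unfold[OF t, symmetric])
      finally have b: "ereal (th (Suc k) t + inner (beta (Suc k) t) (y - xn (Suc k) t)) \<le> Qcal P t y" .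
      show "Qk (Suc k) t y \<le> Qcal P t y" unfolding Qeq using a b by simp
    qed
  qed
qed

lemma partA: "\<forall>t\<in>{2..horizon P + 1}. econvex (Qk k t) \<and> (\<forall>x\<in>enl (Xc P (t-1)) eps. Qk k t x \<le> Qcal P t x)"
proof (induction k)
  case 0 then show ?case using partA0 by blast
next
  case (Suc k) then show ?case using partA_step by blast
qed

lemma partC_aux:
  assumes t: "2 \<le> t" "t \<le> horizon P"
  shows "(k = 0 \<and> (\<forall>x. Qk 0 t x = -\<infinity>)) \<or>
    (\<exists>L q. lipschitz_on L (enl (Xc P (t-1)) eps) q \<and> (\<forall>x\<in>enl (Xc P (t-1)) eps. Qk k t x = ereal (q x)))"
proof (induction k)
  case 0
  have tt: "t \<in> {2..horizon P}" using t by simp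
  have Q: "Qk 0 t = Q0 t" using R1 tt by blast
  from Q0_disj[OF tt] show ?case
  proof (elim disjE conjE)
    assume m: "\<forall>x. Q0 t x = -\<infinity>"
    then show ?case unfolding Q by (intro disjI1 conjI refl)
  next
    assume "\<exists>L q. lipschitz_on L (enl (Xc P (t - 1)) eps) q \<and>
                       (\<forall>x\<in>enl (Xc P (t - 1)) eps. Q0 t x = ereal (q x))"
    then show ?case unfolding Q by (rule disjI2)
  qed
next
  case (Suc k)
  define E where "E = enl (Xc P (t-1)) eps"
  define aff where "aff y = th (Suc k) t + inner (beta (Suc k) t) (y - xn (Suc k) t)" for y
  have Qeq: "Qk (Suc k) t y = max (Qk k t y) (ereal (aff y))" for y
    unfolding aff_def cutS[OF t, of k] by simp
  have la: "lipschitz_on (norm (beta (Suc k) t)) E aff" unfolding aff_def by (rule lipschitz_aff)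
  from Suc.IH show ?case
  proof (elim disjE conjE exE)
    assume "k = 0" "\<forall>x. Qk 0 t x = -\<infinity>"
    then have m: "Qk k t x = -\<infinity>" for x by simp
    have "\<forall>x\<in>E. Qk (Suc k) t x = ereal (aff x)" unfolding Qeq m by (simp add: max_minf)
    then have "lipschitz_on (norm (beta (Suc k) t)) E aff \<and> (\<forall>x\<in>E. Qk (Suc k) t x = ereal (aff x))"
      using la by (rule conjI[rotated])
    then have "\<exists>L q. lipschitz_on L E q \<and> (\<forall>x\<in>E. Qk (Suc k) t x = ereal (q x))" by (intro exI)
    then show ?case unfolding E_def by (rule disjI2)
  next
    fix L q assume L: "lipschitz_on L (enl (Xc P (t-1)) eps) q"
      and q: "\<forall>x\<in>enl (Xc P (t-1)) eps. Qk k t x = ereal (q x)"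
    have "\<forall>x\<in>E. Qk (Suc k) t x = ereal (max (q x) (aff x))"
      unfolding Qeq using q unfolding E_def by simp
    moreover have "lipschitz_on (max L (norm (beta (Suc k) t))) E (\<lambda>x. max (q x) (aff x))"
      by (rule lipschitz_max[OF L[folded E_def] la])
    ultimately have "lipschitz_on (max L (norm (beta (Suc k) t))) E (\<lambda>x. max (q x) (aff x)) \<and>
        (\<forall>x\<in>E. Qk (Suc k) t x = ereal (max (q x) (aff x)))" by (intro conjI)
    then have "\<exists>L q. lipschitz_on L E q \<and> (\<forall>x\<in>E. Qk (Suc k) t x = ereal (q x))" by (intro exI)
    then show ?case unfolding E_def by (rule disjI2)
  qed
qed

end


context srun begin

lemma Qk_mono:
  assumes s: "2 \<le> s" "s \<le> horizon P"
  shows "Qk k s y \<le> Qk (Suc k) s y"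
proof -
  have "Qk (Suc k) s y = max (Qk k s y) (ereal (th (Suc k) s + inner (beta (Suc k) s) (y - xn (Suc k) s)))"
    unfolding cutS[OF s, of k] by (rule refl)
  then show ?thesis by simp
qed

lemma Qk_mono1:
  assumes k: "1 \<le> k" and s: "2 \<le> s" "s \<le> horizon P"
  shows "Qk 1 s y \<le> Qk k s y"
  using k
proof (induction k rule: dec_induct)
  case base then show ?case by simp
next
  case (step k)
  show ?case by (rule order.trans[OF step.IH Qk_mono[OF s]])
qed

lemma Qnext_lb:
  assumes t: "2 \<le> t" "t \<le> horizon P"
  shows "\<exists>cq. \<forall>k\<ge>1. \<forall>x\<in>Xc P t. ereal cq \<le> Qk k (t+1) x"
proof (cases "t = horizon P")
  case True
  show ?thesis
  proof (intro exI[of _ 0] allI impI ballI)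
    fix k :: nat and x
    have "Qk k (t+1) = (\<lambda>_. 0)" using R2 True by simp
    then show "ereal 0 \<le> Qk k (t+1) x" by simp
  qed
next
  case False
  then have s: "2 \<le> t + 1" "t + 1 \<le> horizon P" using t by auto
  have tin: "t \<in> {1..horizon P}" using t by auto
  have "bounded (Xc P t)" by (rule compact_imp_bounded[OF H2_at(4)[OF h2 tin]])
  then obtain B where B: "\<forall>x\<in>Xc P t. norm x \<le> B" unfolding bounded_iff by blast
  have xn1: "xn 1 (t+1) \<in> Xc P t" using xn_in[OF _ s, of 1] by simp
  define cq where "cq = th 1 (t+1) - norm (beta 1 (t+1)) * (2 * B)"
  show ?thesis
  proof (intro exI[of _ cq] allI impI ballI)
    fix k :: nat and x assume k: "1 \<le> k" and x: "x \<in> Xc P t"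
    let ?b = "beta 1 (t+1)" and ?d = "x - xn 1 (t+1)"
    have nx: "norm x \<le> B" "norm (xn 1 (t+1)) \<le> B" using B x xn1 by blast+
    have "norm ?d \<le> norm x + norm (xn 1 (t+1))" by (rule norm_triangle_ineq4)
    then have nd: "norm ?d \<le> 2 * B" using nx by linarith
    have cs: "\<bar>inner ?b ?d\<bar> \<le> norm ?b * norm ?d" by (rule Cauchy_Schwarz_ineq2)
    have "norm ?b * norm ?d \<le> norm ?b * (2 * B)" using nd by (intro mult_left_mono) simp_all
    then have "cq \<le> th 1 (t+1) + inner ?b ?d" unfolding cq_def using cs unfolding abs_le_iff by linarith
    then have "ereal cq \<le> ereal (th 1 (t+1) + inner ?b ?d)" by simp
    also have "\<dots> \<le> Qk 1 (t+1) x"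
    proof -
      have "Qk 1 (t+1) x = max (Qk 0 (t+1) x) (ereal (th 1 (t+1) + inner ?b ?d))"
        using cut(5)[OF _ s, of 1] by simp
      then show ?thesis by simp
    qed
    also have "\<dots> \<le> Qk k (t+1) x" by (rule Qk_mono1[OF k s])
    finally show "ereal cq \<le> Qk k (t+1) x" .
  qed
qed


lemma stage_up:
  assumes t: "2 \<le> t" "t \<le> horizon P" and j: "j < nreal P"
  shows "\<exists>u. \<forall>y\<in>enl (Xc P (t-1)) (eps/2). Vf P (Qcal P (t+1)) t j y \<le> ereal u"
proof -
  have t1: "2 \<le> t + 1" "t + 1 \<le> horizon P + 1" using t by simp_all
  have "\<exists>qc lo. (\<forall>y\<in>enl (Xc P (t + 1 - 1)) eps. Qcal P (t+1) y = ereal (qc y) \<and> lo \<le> qc y)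
       \<and> convex_on (enl (Xc P (t + 1 - 1)) eps) qc"
    by (rule Qcal_good[OF h1 h2 t1])
  then obtain qc lo where qc: "\<forall>y\<in>enl (Xc P t) eps. Qcal P (t+1) y = ereal (qc y) \<and> lo \<le> qc y"
      and qcc: "convex_on (enl (Xc P t) eps) qc" by (simp only: add_diff_cancel_right') blast
  have tin: "t \<in> {1..horizon P}" using t by auto
  have tin': "t - 1 \<in> {1..horizon P}" using t by auto
  have cX: "convex (Xc P t)" by (rule H2_at(3)[OF h2 tin])
  have fin: "\<forall>x\<in>Xc P t. Qcal P (t+1) x = ereal (qc x) \<and> lo \<le> qc x" using qc Xc_sub_enl by blast
  have cvx: "convex_on (Xc P t) qc" by (rule convex_on_subset[OF qcc Xc_sub_enl cX])
  note V = Vstage[OF h2 t j fin cvx]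
  obtain lo' where lo': "\<forall>y\<in>enl (Xc P (t-1)) eps. \<exists>v. Vf P (Qcal P (t+1)) t j y = ereal v \<and> lo' \<le> v"
    using V(1) by blast
  obtain u where u: "\<forall>y\<in>enl (Xc P (t-1)) (eps/2). real_of_ereal (Vf P (Qcal P (t+1)) t j y) \<le> u"
    using convex_bdd_above[OF H2_at(4)[OF h2 tin'] H2_at(3)[OF h2 tin'] eps_pos V(2)] by blast
  have sub: "enl (Xc P (t-1)) (eps/2) \<subseteq> enl (Xc P (t-1)) eps" by (rule enl_mono) (use eps_pos in simp)
  show ?thesis
  proof (rule exI[of _ u], rule ballI)
    fix y assume y: "y \<in> enl (Xc P (t-1)) (eps/2)"
    then have "y \<in> enl (Xc P (t-1)) eps" using sub by blast
    then obtain v where v: "Vf P (Qcal P (t+1)) t j y = ereal v" using lo' by blast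
    have "real_of_ereal (Vf P (Qcal P (t+1)) t j y) \<le> u" using u y by blast
    then show "Vf P (Qcal P (t+1)) t j y \<le> ereal u" using v by simp
  qed
qed

lemma fc_lb:
  assumes t: "2 \<le> t" "t \<le> horizon P" and j: "j < nreal P"
  shows "\<exists>c. \<forall>z\<in>enl (Xc P (t-1)) eps \<times> Xc P t. ereal c \<le> fc P t j z"
proof -
  have tin: "t \<in> {1..horizon P}" using t by auto
  have tin': "t - 1 \<in> {1..horizon P}" using t by auto
  have js: "j \<in> supp P t" using j t by (simp add: supp_ge2)
  have hf: "eproper (fc P t j)" "elsc (fc P t j)" using H2_at(5)[OF h2 tin js] by simp_all
  have K: "compact (enl (Xc P (t-1)) eps \<times> Xc P t)"
    by (rule compact_Times[OF compact_enl[OF H2_at(4)[OF h2 tin']] H2_at(4)[OF h2 tin]])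
  have nm: "\<forall>z\<in>enl (Xc P (t-1)) eps \<times> Xc P t. fc P t j z \<noteq> -\<infinity>"
    using hf(1) unfolding eproper_def by blast
  show ?thesis by (rule lsc_bdd_below[OF K hf(2) nm])
qed

lemma partB:
  assumes t: "2 \<le> t" "t \<le> horizon P"
  shows "(\<exists>C. \<forall>k\<ge>1. \<bar>theta k t\<bar> \<le> ereal C) \<and> (\<exists>C. \<forall>k\<ge>1. norm (beta k t) \<le> C)"
proof -
  define E where "E = enl (Xc P (t-1)) eps"
  define E2 where "E2 = enl (Xc P (t-1)) (eps/2)"
  have E2E: "E2 \<subseteq> E" unfolding E_def E2_def by (rule enl_mono) (use eps_pos in simp)
  have XE2: "Xc P (t-1) \<subseteq> E2" unfolding E2_def by (rule subset_enl) (use eps_pos in simp)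
  have "\<forall>j\<in>{..<nreal P}. \<exists>u. \<forall>y\<in>E2. Vf P (Qcal P (t+1)) t j y \<le> ereal u"
    using stage_up[OF t] unfolding E2_def by blast
  then obtain up where up: "\<forall>j\<in>{..<nreal P}. \<forall>y\<in>E2. Vf P (Qcal P (t+1)) t j y \<le> ereal (up j)"
    by (rule bchoice[THEN exE])
  have "\<forall>j\<in>{..<nreal P}. \<exists>c. \<forall>z\<in>E \<times> Xc P t. ereal c \<le> fc P t j z"
    using fc_lb[OF t] unfolding E_def by blast
  then obtain cf where cf: "\<forall>j\<in>{..<nreal P}. \<forall>z\<in>E \<times> Xc P t. ereal (cf j) \<le> fc P t j z"
    by (rule bchoice[THEN exE])
  obtain cq where cq: "\<forall>k\<ge>1. \<forall>x\<in>Xc P t. ereal cq \<le> Qk k (t+1) x" using Qnext_lb[OF t] by blast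
  have IHA: "\<forall>x\<in>Xc P t. Qk k (t+1) x \<le> Qcal P (t+1) x" for k
  proof -
    have t1: "t + 1 \<in> {2..horizon P + 1}" using t by simp
    have "\<forall>x\<in>enl (Xc P (t + 1 - 1)) eps. Qk k (t+1) x \<le> Qcal P (t+1) x"
      using partA[of k] t1 by blast
    then show ?thesis using Xc_sub_enl by (simp only: add_diff_cancel_right') blast
  qed
  have key: "cf j + cq \<le> ak k t j \<and> (\<forall>y\<in>E2. ak k t j + inner (pig k t j) (y - xn k t) \<le> up j)"
    if k: "1 \<le> k" and j: "j < nreal P" for k j
  proof -
    have xn: "xn k t \<in> Xc P (t-1)" by (rule xn_in[OF k t])
    have xnE: "xn k t \<in> E" using xn XE2 E2E by blast
    have c1: "Vf P (Qk k (t+1)) t j (xn k t) = ereal (ak k t j)" using cut(1)[OF k t] j by blast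
    have c2: "ereal (ak k t j + inner (pig k t j) (y - xn k t)) \<le> Vf P (Qk k (t+1)) t j y" for y
      using cut(2)[OF k t] j by blast
    have lb: "ereal (cf j + cq) \<le> Vf P (Qk k (t+1)) t j (xn k t)"
      unfolding Vf_def
    proof (rule INF_greatest)
      fix x assume x: "x \<in> Xfeas P t j (xn k t)"
      then have xc: "x \<in> Xc P t" using Xfeas_sub by blast
      have "ereal (cf j) \<le> fc P t j (xn k t, x)" using cf j xnE xc by blast
      moreover have "ereal cq \<le> Qk k (t+1) x" using cq k xc by blast
      ultimately have "ereal (cf j) + ereal cq \<le> fc P t j (xn k t, x) + Qk k (t+1) x" by (rule add_mono)
      then show "ereal (cf j + cq) \<le> fc P t j (xn k t, x) + Qk k (t+1) x" by simp
    qed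
    have "cf j + cq \<le> ak k t j" using lb c1 by simp
    moreover have "\<forall>y\<in>E2. ak k t j + inner (pig k t j) (y - xn k t) \<le> up j"
    proof
      fix y assume y: "y \<in> E2"
      have "ereal (ak k t j + inner (pig k t j) (y - xn k t)) \<le> Vf P (Qk k (t+1)) t j y" by (rule c2)
      also have "\<dots> \<le> Vf P (Qcal P (t+1)) t j y"
        by (rule Vf_mono) (rule IHA)
      also have "\<dots> \<le> ereal (up j)" using up j y by blast
      finally show "ak k t j + inner (pig k t j) (y - xn k t) \<le> up j" by simp
    qed
    ultimately show ?thesis by blast
  qed
  define D where "D j = \<bar>cf j + cq\<bar> + \<bar>up j\<bar>" for j
  define G where "G j = 2 * (up j - (cf j + cq)) / eps" for j
  have akb: "\<bar>ak k t j\<bar> \<le> D j" and Gnn: "0 \<le> G j" if k: "1 \<le> k" and j: "j < nreal P" for k j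
  proof -
    have xn: "xn k t \<in> E2" using xn_in[OF k t] XE2 by blast
    have a1: "cf j + cq \<le> ak k t j" using key[OF k j] by blast
    have "ak k t j + inner (pig k t j) (xn k t - xn k t) \<le> up j" using key[OF k j] xn by blast
    then have a2: "ak k t j \<le> up j" by simp
    show "\<bar>ak k t j\<bar> \<le> D j" unfolding D_def using a1 a2 by linarith
    have "0 \<le> up j - (cf j + cq)" using a1 a2 by linarith
    then show "0 \<le> G j" unfolding G_def using eps_pos by simp
  qed
  have pigb: "norm (pig k t j) \<le> G j" if k: "1 \<le> k" and j: "j < nreal P" for k j
  proof (cases "pig k t j = 0")
    case True then show ?thesis using Gnn[OF k j] by simp
  next
    case False
    define g where "g = pig k t j"
    have ng: "0 < norm g" using False unfolding g_def by simp
    define c where "c = eps / 2 / norm g"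
    have c0: "0 \<le> c" unfolding c_def using eps_pos ng by simp
    have cn: "c * norm g = eps / 2" unfolding c_def using ng by simp
    define y where "y = xn k t + c *\<^sub>R g"
    have "norm (xn k t - y) = c * norm g" unfolding y_def using c0 by simp
    then have "dist (xn k t) y = eps / 2" using cn by (simp only: dist_norm)
    then have yc: "y \<in> cball (xn k t) (eps / 2)" by (simp only: mem_cball order.refl)
    have xnX: "xn k t \<in> Xc P (t-1)" by (rule xn_in[OF k t])
    have yE2: "y \<in> E2" unfolding E2_def enl_def by (rule UN_I[of "xn k t" "Xc P (t-1)" y "\<lambda>x. cball x (eps / 2)", OF xnX yc])
    have "inner g (y - xn k t) = c * (inner g g)" unfolding y_def by simp
    also have "\<dots> = c * (norm g)\<^sup>2" by (simp add: power2_norm_eq_inner)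
    also have "\<dots> = (c * norm g) * norm g" by (simp add: power2_eq_square)
    also have "\<dots> = eps / 2 * norm g" using cn by simp
    finally have ig: "inner g (y - xn k t) = eps / 2 * norm g" .
    have "ak k t j + inner g (y - xn k t) \<le> up j" using key[OF k j] yE2 unfolding g_def by blast
    moreover have "cf j + cq \<le> ak k t j" using key[OF k j] by blast
    ultimately have h: "eps / 2 * norm g \<le> up j - (cf j + cq)" using ig by linarith
    have "norm g * eps = 2 * (eps / 2 * norm g)" by simp
    also have "\<dots> \<le> 2 * (up j - (cf j + cq))" using h by (rule mult_left_mono) simp
    finally have "norm g * eps \<le> 2 * (up j - (cf j + cq))" .
    then have "norm g \<le> 2 * (up j - (cf j + cq)) / eps" using eps_pos by (simp add: pos_le_divide_eq)
    then show ?thesis unfolding G_def g_def .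
  qed
  have pnn: "0 \<le> prb P t j" if "j < nreal P" for j using H1_prb[OF h1 t that] by simp
  show ?thesis
  proof (intro conjI)
    show "\<exists>C. \<forall>k\<ge>1. \<bar>theta k t\<bar> \<le> ereal C"
    proof (rule exI[of _ "\<Sum>j<nreal P. prb P t j * D j"], intro allI impI)
      fix k :: nat assume k: "1 \<le> k"
      have "\<bar>th k t\<bar> \<le> (\<Sum>j<nreal P. \<bar>prb P t j * ak k t j\<bar>)" unfolding th_def by (rule sum_abs)
      also have "\<dots> \<le> (\<Sum>j<nreal P. prb P t j * D j)"
      proof (rule sum_mono)
        fix j assume "j \<in> {..<nreal P}"
        then have j: "j < nreal P" by simp
        have "\<bar>prb P t j * ak k t j\<bar> = prb P t j * \<bar>ak k t j\<bar>" using pnn[OF j] by (simp add: abs_mult)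
        also have "\<dots> \<le> prb P t j * D j" using akb[OF k j] pnn[OF j] by (rule mult_left_mono)
        finally show "\<bar>prb P t j * ak k t j\<bar> \<le> prb P t j * D j" .
      qed
      finally have "\<bar>th k t\<bar> \<le> (\<Sum>j<nreal P. prb P t j * D j)" .
      then show "\<bar>theta k t\<bar> \<le> ereal (\<Sum>j<nreal P. prb P t j * D j)" using cut(3)[OF k t] by simp
    qed
    show "\<exists>C. \<forall>k\<ge>1. norm (beta k t) \<le> C"
    proof (rule exI[of _ "\<Sum>j<nreal P. prb P t j * G j"], intro allI impI)
      fix k :: nat assume k: "1 \<le> k"
      have "norm (beta k t) \<le> (\<Sum>j<nreal P. norm (prb P t j *\<^sub>R pig k t j))"
        unfolding cut(4)[OF k t] by (rule norm_sum)
      also have "\<dots> \<le> (\<Sum>j<nreal P. prb P t j * G j)"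
      proof (rule sum_mono)
        fix j assume "j \<in> {..<nreal P}"
        then have j: "j < nreal P" by simp
        have "norm (prb P t j *\<^sub>R pig k t j) = prb P t j * norm (pig k t j)" using pnn[OF j] by simp
        also have "\<dots> \<le> prb P t j * G j" using pigb[OF k j] pnn[OF j] by (rule mult_left_mono)
        finally show "norm (prb P t j *\<^sub>R pig k t j) \<le> prb P t j * G j" .
      qed
      finally show "norm (beta k t) \<le> (\<Sum>j<nreal P. prb P t j * G j)" .
    qed
  qed
qed

end

theorem mainTheorem4:
  fixes P :: "('n::finite,'m::finite,'c::finite) msp"
    and eps :: real
    and lam :: "nat \<Rightarrow> nat \<Rightarrow> real"
    and xP :: "nat \<Rightarrow> nat \<Rightarrow> real^'n"
    and Q0 :: "nat \<Rightarrow> real^'n \<Rightarrow> ereal"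
    and Mw :: "'w measure"
    and xf :: "'w \<Rightarrow> nat \<Rightarrow> nat list \<Rightarrow> real^'n"
    and sj :: "'w \<Rightarrow> nat \<Rightarrow> nat \<Rightarrow> nat"
    and Qk :: "'w \<Rightarrow> nat \<Rightarrow> nat \<Rightarrow> real^'n \<Rightarrow> ereal"
    and pig :: "'w \<Rightarrow> nat \<Rightarrow> nat \<Rightarrow> nat \<Rightarrow> real^'n"
    and theta :: "'w \<Rightarrow> nat \<Rightarrow> nat \<Rightarrow> ereal"
    and beta :: "'w \<Rightarrow> nat \<Rightarrow> nat \<Rightarrow> real^'n"
  assumes h1: "H1 P"
    and h2: "H2 P eps"
    and Q0: "\<forall>t\<in>{2..horizon P}. (\<forall>x. Q0 t x = -\<infinity>) \<or>
               (econvex (Q0 t) \<and>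
                (\<exists>L q. lipschitz_on L (enl (Xst P (t - 1)) eps) q \<and>
                       (\<forall>x\<in>enl (Xst P (t - 1)) eps. Q0 t x = ereal (q x))) \<and>
                (\<forall>x\<in>enl (Xst P (t - 1)) eps. Q0 t x \<le> Qcal P t x))"
    and lam: "\<forall>t k. 0 \<le> lam t k" "\<forall>t. lam t 1 = 0" "\<forall>k. lam (horizon P) k = 0"
    and xP: "\<forall>t\<in>{1..horizon P}. \<forall>k\<ge>1. xP t k \<in> Xc P t"
    and prob: "prob_space Mw"
    and run: "\<forall>w\<in>space Mw. sreda_run P lam xP Q0 (xf w) (sj w) (Qk w) (pig w) (theta w) (beta w)"
  shows "AE w in Mw. \<forall>t\<in>{2..horizon P + 1}.
           (\<forall>k\<ge>1. econvex (Qk w k t) \<and>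
                   (\<forall>x\<in>enl (Xst P (t - 1)) eps. Qk w k t x \<le> Qcal P t x)) \<and>
           (t \<le> horizon P \<longrightarrow>
              (\<exists>C. \<forall>k\<ge>1. \<bar>theta w k t\<bar> \<le> ereal C) \<and>
              (\<exists>C. \<forall>k\<ge>1. norm (beta w k t) \<le> C)) \<and>
           (\<forall>k\<ge>1. \<exists>L q. lipschitz_on L (enl (Xst P (t - 1)) eps) q \<and>
                   (\<forall>x\<in>enl (Xst P (t - 1)) eps. Qk w k t x = ereal (q x)))"
proof (rule AE_I2)
  fix w assume w: "w \<in> space Mw"
  have runw: "sreda_run P lam xP Q0 (xf w) (sj w) (Qk w) (pig w) (theta w) (beta w)" using run w by blast
  interpret R: srun P eps lam xP Q0 "xf w" "sj w" "Qk w" "pig w" "theta w" "beta w"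
    by (rule srun.intro[OF h1 h2 Q0 runw])
  show "\<forall>t\<in>{2..horizon P + 1}.
           (\<forall>k\<ge>1. econvex (Qk w k t) \<and>
                   (\<forall>x\<in>enl (Xst P (t - 1)) eps. Qk w k t x \<le> Qcal P t x)) \<and>
           (t \<le> horizon P \<longrightarrow>
              (\<exists>C. \<forall>k\<ge>1. \<bar>theta w k t\<bar> \<le> ereal C) \<and>
              (\<exists>C. \<forall>k\<ge>1. norm (beta w k t) \<le> C)) \<and>
           (\<forall>k\<ge>1. \<exists>L q. lipschitz_on L (enl (Xst P (t - 1)) eps) q \<and>
                   (\<forall>x\<in>enl (Xst P (t - 1)) eps. Qk w k t x = ereal (q x)))"
  proof
    fix t assume t: "t \<in> {2..horizon P + 1}"
    have "1 \<le> t - 1" using t by auto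
    then have XE: "Xst P (t-1) = Xc P (t-1)" by (rule Xst_pos)
    have P1: "\<forall>k\<ge>1. econvex (Qk w k t) \<and>
                   (\<forall>x\<in>enl (Xc P (t - 1)) eps. Qk w k t x \<le> Qcal P t x)"
    proof (intro allI impI)
      fix k :: nat
      show "econvex (Qk w k t) \<and> (\<forall>x\<in>enl (Xc P (t - 1)) eps. Qk w k t x \<le> Qcal P t x)"
        using R.partA[of k] t by blast
    qed
    have P2: "t \<le> horizon P \<longrightarrow>
              (\<exists>C. \<forall>k\<ge>1. \<bar>theta w k t\<bar> \<le> ereal C) \<and>
              (\<exists>C. \<forall>k\<ge>1. norm (beta w k t) \<le> C)"
    proof
      assume "t \<le> horizon P"
      then have t2: "2 \<le> t" "t \<le> horizon P" using t by auto
      show "(\<exists>C. \<forall>k\<ge>1. \<bar>theta w k t\<bar> \<le> ereal C) \<and> (\<exists>C. \<forall>k\<ge>1. norm (beta w k t) \<le> C)"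
        by (rule R.partB[OF t2])
    qed
    have P3: "\<forall>k\<ge>1. \<exists>L q. lipschitz_on L (enl (Xc P (t - 1)) eps) q \<and>
                   (\<forall>x\<in>enl (Xc P (t - 1)) eps. Qk w k t x = ereal (q x))"
    proof (intro allI impI)
      fix k :: nat assume k: "1 \<le> k"
      show "\<exists>L q. lipschitz_on L (enl (Xc P (t - 1)) eps) q \<and>
                   (\<forall>x\<in>enl (Xc P (t - 1)) eps. Qk w k t x = ereal (q x))"
      proof (cases "t = horizon P + 1")
        case True
        have Q: "Qk w k t = (\<lambda>_. 0)" using R.R2 True by simp
        have "lipschitz_on 0 (enl (Xc P (t - 1)) eps) (\<lambda>_. 0::real) \<and>
              (\<forall>x\<in>enl (Xc P (t - 1)) eps. Qk w k t x = ereal ((\<lambda>_. 0::real) x))"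
          unfolding Q by (simp add: lipschitz_on_constant)
        then show ?thesis by blast
      next
        case False
        then have t2: "2 \<le> t" "t \<le> horizon P" using t by auto
        have "k \<noteq> 0" using k by simp
        with R.partC_aux[OF t2, of k] show ?thesis by blast
      qed
    qed
    show "(\<forall>k\<ge>1. econvex (Qk w k t) \<and>
                   (\<forall>x\<in>enl (Xst P (t - 1)) eps. Qk w k t x \<le> Qcal P t x)) \<and>
           (t \<le> horizon P \<longrightarrow>
              (\<exists>C. \<forall>k\<ge>1. \<bar>theta w k t\<bar> \<le> ereal C) \<and>
              (\<exists>C. \<forall>k\<ge>1. norm (beta w k t) \<le> C)) \<and>
           (\<forall>k\<ge>1. \<exists>L q. lipschitz_on L (enl (Xst P (t - 1)) eps) q \<and>
                   (\<forall>x\<in>enl (Xst P (t - 1)) eps. Qk w k t x = ereal (q x)))"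
      unfolding XE using P1 P2 P3 by (intro conjI)
  qed
qed

end
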